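(* Let $A$ be a modal formula and let $t$ be a translation for $A$ based on a sequence $Q=\{q_i\}_{i=0}^\infty$ of atoms not occurring in $A$. If $\mathbf{GL}\vdash A^t$, then $\mathbf{K4}\vdash A$.
   Context: Modal formulas are built from atoms and $\bot$ using $\wedge,\vee,\to,\neg,\Box$. $\mathbf{K4}$ is the normal modal logic with axioms $\mathbf{K}$ and $\Box A\to\Box\Box A$; $\mathbf{GL}$ is $\mathbf{K4}$ plus Löb's axiom $\Box(\Box A\to A)\to\Box A$. A translation $t$ for $A$ based on $Q$ is an assignment of natural numbers to the occurrences of $\Box$ in $A$ such that the number assigned to any box occurrence is greater than the numbers assigned to all box occurrences within its scope. $A^t$ is defined by: $p^t=p$ for atoms; $(B\circ C)^t=B^t\circ C^t$ for $\circ\in\{\wedge,\vee,\to\}$; $(\neg B)^t=\neg B^t$; $(\Box B)^t=\Box(\bigwedge_{i=0}^n q_i\to B^t)$ where $n$ is the number $t$ assigns to that box occurrence. *)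

theory Defs
  imports Main
begin

datatype 'a fm =
    Atom 'a
  | Bot
  | And "'a fm" "'a fm"
  | Or "'a fm" "'a fm"
  | Imp "'a fm" "'a fm"
  | Neg "'a fm"
  | Box "'a fm"

fun atoms :: "'a fm \<Rightarrow> 'a set" where
  "atoms (Atom p) = {p}"
| "atoms Bot = {}"
| "atoms (And A B) = atoms A \<union> atoms B"
| "atoms (Or A B) = atoms A \<union> atoms B"
| "atoms (Imp A B) = atoms A \<union> atoms B"
| "atoms (Neg A) = atoms A"
| "atoms (Box A) = atoms A"

text \<open>Classical propositional evaluation, treating boxed formulas as propositional
  variables; a tautology (instance) is a formula true under every such valuation.\<close>

fun peval :: "('a fm \<Rightarrow> bool) \<Rightarrow> 'a fm \<Rightarrow> bool" where
  "peval v (Atom p) = v (Atom p)"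
| "peval v Bot = False"
| "peval v (And A B) = (peval v A \<and> peval v B)"
| "peval v (Or A B) = (peval v A \<or> peval v B)"
| "peval v (Imp A B) = (peval v A \<longrightarrow> peval v B)"
| "peval v (Neg A) = (\<not> peval v A)"
| "peval v (Box A) = v (Box A)"

definition taut :: "'a fm \<Rightarrow> bool" where
  "taut A \<longleftrightarrow> (\<forall>v. peval v A)"

inductive K4 :: "'a fm \<Rightarrow> bool" where
  K4_taut: "taut A \<Longrightarrow> K4 A"
| K4_K: "K4 (Imp (Box (Imp A B)) (Imp (Box A) (Box B)))"
| K4_4: "K4 (Imp (Box A) (Box (Box A)))"
| K4_MP: "K4 (Imp A B) \<Longrightarrow> K4 A \<Longrightarrow> K4 B"
| K4_Nec: "K4 A \<Longrightarrow> K4 (Box A)"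

inductive GL :: "'a fm \<Rightarrow> bool" where
  GL_taut: "taut A \<Longrightarrow> GL A"
| GL_K: "GL (Imp (Box (Imp A B)) (Imp (Box A) (Box B)))"
| GL_4: "GL (Imp (Box A) (Box (Box A)))"
| GL_Loeb: "GL (Imp (Box (Imp (Box A) A)) (Box A))"
| GL_MP: "GL (Imp A B) \<Longrightarrow> GL A \<Longrightarrow> GL B"
| GL_Nec: "GL A \<Longrightarrow> GL (Box A)"

text \<open>A translation for A assigns a natural number to each occurrence of Box in A.
  We represent it as a formula whose boxes carry a number and which erases to A.\<close>

datatype 'a nfm =
    NAtom 'a
  | NBot
  | NAnd "'a nfm" "'a nfm"
  | NOr "'a nfm" "'a nfm"
  | NImp "'a nfm" "'a nfm"
  | NNeg "'a nfm"
  | NBox nat "'a nfm"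

fun erase :: "'a nfm \<Rightarrow> 'a fm" where
  "erase (NAtom p) = Atom p"
| "erase NBot = Bot"
| "erase (NAnd A B) = And (erase A) (erase B)"
| "erase (NOr A B) = Or (erase A) (erase B)"
| "erase (NImp A B) = Imp (erase A) (erase B)"
| "erase (NNeg A) = Neg (erase A)"
| "erase (NBox n A) = Box (erase A)"

fun boxnums :: "'a nfm \<Rightarrow> nat set" where
  "boxnums (NAtom p) = {}"
| "boxnums NBot = {}"
| "boxnums (NAnd A B) = boxnums A \<union> boxnums B"
| "boxnums (NOr A B) = boxnums A \<union> boxnums B"
| "boxnums (NImp A B) = boxnums A \<union> boxnums B"
| "boxnums (NNeg A) = boxnums A"
| "boxnums (NBox n A) = insert n (boxnums A)"

fun wf_num :: "'a nfm \<Rightarrow> bool" where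
  "wf_num (NAtom p) = True"
| "wf_num NBot = True"
| "wf_num (NAnd A B) = (wf_num A \<and> wf_num B)"
| "wf_num (NOr A B) = (wf_num A \<and> wf_num B)"
| "wf_num (NImp A B) = (wf_num A \<and> wf_num B)"
| "wf_num (NNeg A) = wf_num A"
| "wf_num (NBox n A) = (wf_num A \<and> (\<forall>m\<in>boxnums A. m < n))"

definition is_translation :: "'a nfm \<Rightarrow> 'a fm \<Rightarrow> bool" where
  "is_translation t A \<longleftrightarrow> erase t = A \<and> wf_num t"

fun qconj :: "(nat \<Rightarrow> 'a) \<Rightarrow> nat \<Rightarrow> 'a fm" where
  "qconj Q 0 = Atom (Q 0)"
| "qconj Q (Suc n) = And (qconj Q n) (Atom (Q (Suc n)))"

fun translate :: "(nat \<Rightarrow> 'a) \<Rightarrow> 'a nfm \<Rightarrow> 'a fm" where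
  "translate Q (NAtom p) = Atom p"
| "translate Q NBot = Bot"
| "translate Q (NAnd A B) = And (translate Q A) (translate Q B)"
| "translate Q (NOr A B) = Or (translate Q A) (translate Q B)"
| "translate Q (NImp A B) = Imp (translate Q A) (translate Q B)"
| "translate Q (NNeg A) = Neg (translate Q A)"
| "translate Q (NBox n A) = Box (Imp (qconj Q n) (translate Q A))"

end

theory Submission
  imports Defs
begin

fun imps :: "'a fm list \<Rightarrow> 'a fm \<Rightarrow> 'a fm" where
  "imps [] B = B"
| "imps (A # As) B = Imp A (imps As B)"

lemma peval_imps: "peval v (imps As B) = ((\<forall>A\<in>set As. peval v A) \<longrightarrow> peval v B)"
  by (induction As) auto

lemma K4_imps: "K4 (imps As B) \<Longrightarrow> \<forall>A\<in>set As. K4 A \<Longrightarrow> K4 B"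
  by (induction As) (auto intro: K4_MP)

lemma K4_pc:
  assumes "\<And>v. (\<forall>A\<in>set As. peval v A) \<Longrightarrow> peval v B" "\<forall>A\<in>set As. K4 A"
  shows "K4 B"
proof -
  have "taut (imps As B)" using assms(1) unfolding taut_def by (simp add: peval_imps)
  then show ?thesis using K4_imps assms(2) K4_taut by blast
qed

fun conjs :: "'a fm list \<Rightarrow> 'a fm" where
  "conjs [] = Imp Bot Bot"
| "conjs (x # xs) = And x (conjs xs)"

lemma peval_conjs: "peval v (conjs L) = (\<forall>x\<in>set L. peval v x)"
  by (induction L) auto

definition cons :: "'a fm set \<Rightarrow> bool" where
  "cons S \<longleftrightarrow> \<not> (\<exists>L. set L \<subseteq> S \<and> K4 (Neg (conjs L)))"

definition maxcons :: "'a fm set \<Rightarrow> bool" where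
  "maxcons M \<longleftrightarrow> cons M \<and> (\<forall>X. cons X \<longrightarrow> M \<subseteq> X \<longrightarrow> X = M)"

lemma lindenbaum:
  assumes "cons S"
  shows "\<exists>M. S \<subseteq> M \<and> maxcons M"
proof -
  let ?A = "{X. cons X \<and> S \<subseteq> X}"
  have "\<exists>M\<in>?A. \<forall>X\<in>?A. M \<subseteq> X \<longrightarrow> X = M"
  proof (rule subset_Zorn_nonempty)
    have "S \<in> ?A" using assms by simp
    then show "?A \<noteq> {}" by (intro notI) simp
  next
    fix C assume C: "C \<noteq> {}" "subset.chain ?A C"
    have sub: "C \<subseteq> ?A" using C(2) unfolding subset.chain_def by (rule conjunct1)
    have "cons (\<Union>C)"
      unfolding cons_def
    proof
      assume "\<exists>L. set L \<subseteq> \<Union>C \<and> K4 (Neg (conjs L))"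
      then obtain L where L: "set L \<subseteq> \<Union>C" "K4 (Neg (conjs L))" by (elim exE conjE)
      obtain B where B: "B \<in> C" "set L \<subseteq> B"
        by (rule finite_subset_Union_chain[OF finite_set L(1) C(1) C(2)])
      have "cons B" using sub B(1) by (auto simp del: cons_def)
      then show False using L(2) B(2) unfolding cons_def by (elim notE) (rule exI, rule conjI)
    qed
    moreover have "S \<subseteq> \<Union>C"
    proof -
      obtain X where X: "X \<in> C" using C(1) by auto
      then have "S \<subseteq> X" using sub by (auto simp del: cons_def)
      then show ?thesis using X by auto
    qed
    ultimately show "\<Union>C \<in> ?A" by simp
  qed
  then obtain M where "M \<in> ?A" "\<forall>X\<in>?A. M \<subseteq> X \<longrightarrow> X = M" by (elim bexE)
  then show ?thesis unfolding maxcons_def by (intro exI[of _ M]) (auto simp del: cons_def)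
qed

lemma mc_notin:
  assumes "maxcons M" "B \<notin> M"
  shows "\<exists>L. set L \<subseteq> M \<and> K4 (Imp (conjs L) (Neg B))"
proof -
  have "\<not> cons (insert B M)" using assms unfolding maxcons_def by blast
  then obtain L' where L': "set L' \<subseteq> insert B M" "K4 (Neg (conjs L'))" unfolding cons_def by blast
  let ?L = "filter (\<lambda>x. x \<noteq> B) L'"
  have "set ?L \<subseteq> M" using L'(1) by auto
  moreover have "K4 (Imp (conjs ?L) (Neg B))"
    by (rule K4_pc[of "[Neg (conjs L')]"]) (use L' in \<open>auto simp: peval_conjs\<close>)
  ultimately show ?thesis by blast
qed

lemma mc_closed:
  assumes "maxcons M" "set L \<subseteq> M" "K4 (Imp (conjs L) B)"
  shows "B \<in> M"
proof (rule ccontr)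
  assume "B \<notin> M"
  then obtain L2 where L2: "set L2 \<subseteq> M" "K4 (Imp (conjs L2) (Neg B))" using mc_notin assms(1) by blast
  have "K4 (Neg (conjs (L @ L2)))"
    by (rule K4_pc[of "[Imp (conjs L) B, Imp (conjs L2) (Neg B)]"]) (use L2 assms in \<open>auto simp: peval_conjs\<close>)
  moreover have "set (L @ L2) \<subseteq> M" using L2 assms by auto
  ultimately show False using assms(1) unfolding maxcons_def cons_def by blast
qed

lemma mc_neg: "maxcons M \<Longrightarrow> (Neg B \<in> M) = (B \<notin> M)"
proof
  assume "maxcons M" "Neg B \<in> M"
  show "B \<notin> M"
  proof
    assume "B \<in> M"
    have "K4 (Neg (conjs [B, Neg B]))" by (rule K4_pc[of "[]"]) auto
    moreover have "set [B, Neg B] \<subseteq> M" using \<open>B \<in> M\<close> \<open>Neg B \<in> M\<close> by simp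
    ultimately show False using \<open>maxcons M\<close> unfolding maxcons_def cons_def by blast
  qed
next
  assume "maxcons M" "B \<notin> M"
  then obtain L where "set L \<subseteq> M" "K4 (Imp (conjs L) (Neg B))" using mc_notin by blast
  then show "Neg B \<in> M" using mc_closed \<open>maxcons M\<close> by blast
qed

lemma mc_rule:
  assumes "maxcons M" "\<forall>x\<in>set L. x \<in> M"
    "\<And>v. (\<forall>x\<in>set L. peval v x) \<Longrightarrow> peval v B"
  shows "B \<in> M"
proof (rule mc_closed[OF assms(1), of L])
  show "set L \<subseteq> M" using assms(2) by auto
  show "K4 (Imp (conjs L) B)" by (rule K4_pc[of "[]"]) (use assms(3) in \<open>auto simp: peval_conjs\<close>)
qed

lemma mc_peval:
  assumes "maxcons M"
  shows "peval (\<lambda>X. X \<in> M) X = (X \<in> M)"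
proof (induction X)
  case (Atom x) then show ?case by simp
next
  case Bot
  have "Bot \<notin> M"
  proof
    assume "Bot \<in> M"
    have "K4 (Neg (conjs [Bot]))" by (rule K4_pc[of "[]"], auto)
    moreover have "set [Bot] \<subseteq> M" using \<open>Bot \<in> M\<close> by simp
    ultimately show False using assms unfolding maxcons_def cons_def by blast
  qed
  then show ?case by simp
next
  case (And X1 X2)
  have "And X1 X2 \<in> M \<longleftrightarrow> X1 \<in> M \<and> X2 \<in> M"
  proof (intro iffI conjI)
    assume "And X1 X2 \<in> M"
    then show "X1 \<in> M" by - (rule mc_rule[OF assms, of "[And X1 X2]"], auto)
    from \<open>And X1 X2 \<in> M\<close> show "X2 \<in> M" by - (rule mc_rule[OF assms, of "[And X1 X2]"], auto)
  next
    assume "X1 \<in> M \<and> X2 \<in> M"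
    then show "And X1 X2 \<in> M" by - (rule mc_rule[OF assms, of "[X1, X2]"], auto)
  qed
  then show ?case using And by simp
next
  case (Or X1 X2)
  have "Or X1 X2 \<in> M \<longleftrightarrow> X1 \<in> M \<or> X2 \<in> M"
  proof (intro iffI)
    assume h: "Or X1 X2 \<in> M"
    show "X1 \<in> M \<or> X2 \<in> M"
    proof (cases "X1 \<in> M")
      case False
      then have "Neg X1 \<in> M" using mc_neg[OF assms] by blast
      then have "X2 \<in> M" using h by - (rule mc_rule[OF assms, of "[Or X1 X2, Neg X1]"], auto)
      then show ?thesis by blast
    qed blast
  next
    assume "X1 \<in> M \<or> X2 \<in> M"
    then show "Or X1 X2 \<in> M"
    proof
      assume "X1 \<in> M" then show ?thesis by - (rule mc_rule[OF assms, of "[X1]"], auto)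
    next
      assume "X2 \<in> M" then show ?thesis by - (rule mc_rule[OF assms, of "[X2]"], auto)
    qed
  qed
  then show ?case using Or by simp
next
  case (Imp X1 X2)
  have "Imp X1 X2 \<in> M \<longleftrightarrow> (X1 \<in> M \<longrightarrow> X2 \<in> M)"
  proof (intro iffI impI)
    assume "Imp X1 X2 \<in> M" "X1 \<in> M"
    then show "X2 \<in> M" by - (rule mc_rule[OF assms, of "[Imp X1 X2, X1]"], auto)
  next
    assume h: "X1 \<in> M \<longrightarrow> X2 \<in> M"
    show "Imp X1 X2 \<in> M"
    proof (cases "X1 \<in> M")
      case True
      then have "X2 \<in> M" using h by blast
      then show ?thesis by - (rule mc_rule[OF assms, of "[X2]"], auto)
    next
      case False
      then have "Neg X1 \<in> M" using mc_neg[OF assms] by blast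
      then show ?thesis by - (rule mc_rule[OF assms, of "[Neg X1]"], auto)
    qed
  qed
  then show ?case using Imp by simp
next
  case (Neg X)
  then show ?case using mc_neg[OF assms] by simp
next
  case (Box X) then show ?case by simp
qed

lemma K4_box_conjs: "K4 (Imp (conjs L) B) \<Longrightarrow> K4 (Imp (conjs (map Box L)) (Box B))"
proof (induction L arbitrary: B)
  case Nil
  have "K4 B" by (rule K4_pc[of "[Imp (conjs []) B]"]) (use Nil in auto)
  then have "K4 (Box B)" by (rule K4_Nec)
  then show ?case by (intro K4_pc[of "[Box B]"]) auto
next
  case (Cons x L)
  have "K4 (Imp (conjs L) (Imp x B))" by (rule K4_pc[of "[Imp (conjs (x # L)) B]"]) (use Cons in auto)
  then have h: "K4 (Imp (conjs (map Box L)) (Box (Imp x B)))" using Cons.IH by blast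
  show ?case
    by (rule K4_pc[of "[Imp (conjs (map Box L)) (Box (Imp x B)), Imp (Box (Imp x B)) (Imp (Box x) (Box B))]"])
      (use h K4_K in auto)
qed

definition Rc :: "'a fm set \<Rightarrow> 'a fm set \<Rightarrow> bool" where
  "Rc M N \<longleftrightarrow> (\<forall>B. Box B \<in> M \<longrightarrow> B \<in> N)"

lemma mc_box:
  assumes "maxcons M"
  shows "Box B \<in> M \<longleftrightarrow> (\<forall>N. maxcons N \<and> Rc M N \<longrightarrow> B \<in> N)"
proof
  assume "Box B \<in> M" then show "\<forall>N. maxcons N \<and> Rc M N \<longrightarrow> B \<in> N" unfolding Rc_def by blast
next
  assume H: "\<forall>N. maxcons N \<and> Rc M N \<longrightarrow> B \<in> N"
  show "Box B \<in> M"
  proof (rule ccontr)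
    assume nb: "Box B \<notin> M"
    let ?S = "insert (Neg B) {C. Box C \<in> M}"
    have "cons ?S" unfolding cons_def
    proof
      assume "\<exists>L. set L \<subseteq> ?S \<and> K4 (Neg (conjs L))"
      then obtain L where L: "set L \<subseteq> ?S" "K4 (Neg (conjs L))" by blast
      let ?L1 = "filter (\<lambda>x. x \<noteq> Neg B) L"
      have "K4 (Imp (conjs ?L1) B)"
        by (rule K4_pc[of "[Neg (conjs L)]"]) (use L in \<open>auto simp: peval_conjs\<close>)
      then have "K4 (Imp (conjs (map Box ?L1)) (Box B))" by (rule K4_box_conjs)
      moreover have "set (map Box ?L1) \<subseteq> M" using L(1) by auto
      ultimately show False using mc_closed[OF assms] nb by blast
    qed
    then obtain N where "?S \<subseteq> N" "maxcons N" using lindenbaum by blast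
    then have "Rc M N" "Neg B \<in> N" unfolding Rc_def by auto
    then show False using H \<open>maxcons N\<close> mc_neg by blast
  qed
qed

lemma mc_K4: "maxcons M \<Longrightarrow> K4 B \<Longrightarrow> B \<in> M"
  using mc_closed[of M "[]" B] K4_pc[of "[B]" "Imp (conjs []) B"] by auto

lemma Rc_trans:
  assumes "maxcons M" "Rc M N" "Rc N P" shows "Rc M P"
  unfolding Rc_def
proof (intro allI impI)
  fix B assume "Box B \<in> M"
  moreover have "Imp (Box B) (Box (Box B)) \<in> M" using mc_K4[OF assms(1)] K4_4 by blast
  ultimately have "Box (Box B) \<in> M" using mc_rule[OF assms(1), of "[Box B, Imp (Box B) (Box (Box B))]" "Box (Box B)"] by auto
  then show "B \<in> P" using assms(2,3) unfolding Rc_def by blast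
qed

fun sem :: "('w \<Rightarrow> 'w \<Rightarrow> bool) \<Rightarrow> ('a \<Rightarrow> 'w \<Rightarrow> bool) \<Rightarrow> 'w \<Rightarrow> 'a fm \<Rightarrow> bool" where
  "sem R V w (Atom p) = V p w"
| "sem R V w Bot = False"
| "sem R V w (And A B) = (sem R V w A \<and> sem R V w B)"
| "sem R V w (Or A B) = (sem R V w A \<or> sem R V w B)"
| "sem R V w (Imp A B) = (sem R V w A \<longrightarrow> sem R V w B)"
| "sem R V w (Neg A) = (\<not> sem R V w A)"
| "sem R V w (Box A) = (\<forall>u. R w u \<longrightarrow> sem R V u A)"

lemma sem_peval: "peval (\<lambda>X. sem R V w X) X = sem R V w X"
  by (induction X) auto

lemma GL_sound:
  assumes "GL X" "\<And>x y z. R x y \<Longrightarrow> R y z \<Longrightarrow> R x z" "\<And>x y. R x y \<Longrightarrow> f y < (f x :: nat)"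
  shows "sem R V w X"
  using assms(1)
proof (induction arbitrary: w)
  case (GL_taut A)
  then have "peval (sem R V w) A" unfolding taut_def by blast
  then show ?case by (simp only: sem_peval)
next
  case (GL_K A B) then show ?case by simp
next
  case (GL_4 A) then show ?case using assms(2) by auto
next
  case (GL_Loeb A)
  show ?case
  proof (simp, intro impI allI)
    fix v
    assume H: "\<forall>u. R w u \<longrightarrow> (\<forall>ua. R u ua \<longrightarrow> sem R V ua A) \<longrightarrow> sem R V u A"
    have "\<forall>v. f v = n \<longrightarrow> R w v \<longrightarrow> sem R V v A" for n
    proof (induction n rule: less_induct)
      case (less n)
      show ?case
      proof (intro allI impI)
        fix v assume "f v = n" "R w v"
        have "\<forall>u. R v u \<longrightarrow> sem R V u A"
          using less \<open>f v = n\<close> \<open>R w v\<close> assms(2,3) by blast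
        then show "sem R V v A" using H \<open>R w v\<close> by blast
      qed
    qed
    then show "R w v \<Longrightarrow> sem R V v A" by blast
  qed
next
  case (GL_MP A B) then show ?case by simp
next
  case (GL_Nec A) then show ?case by simp
qed

lemma mc_Bot: "maxcons M \<Longrightarrow> Bot \<notin> M"
  using mc_peval[of M Bot] by simp
lemma mc_And: "maxcons M \<Longrightarrow> And A B \<in> M \<longleftrightarrow> A \<in> M \<and> B \<in> M"
  using mc_peval[of M "And A B"] mc_peval[of M A] mc_peval[of M B] by simp
lemma mc_Or: "maxcons M \<Longrightarrow> Or A B \<in> M \<longleftrightarrow> A \<in> M \<or> B \<in> M"
  using mc_peval[of M "Or A B"] mc_peval[of M A] mc_peval[of M B] by simp
lemma mc_Imp: "maxcons M \<Longrightarrow> Imp A B \<in> M \<longleftrightarrow> (A \<in> M \<longrightarrow> B \<in> M)"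
  using mc_peval[of M "Imp A B"] mc_peval[of M A] mc_peval[of M B] by simp
lemma mc_Neg': "maxcons M \<Longrightarrow> Neg A \<in> M \<longleftrightarrow> A \<notin> M"
  using mc_neg by blast

definition RR :: "('a fm set \<times> nat) \<Rightarrow> ('a fm set \<times> nat) \<Rightarrow> bool" where
  "RR x y \<longleftrightarrow> maxcons (fst x) \<and> maxcons (fst y) \<and> Rc (fst x) (fst y) \<and> snd y < snd x"

definition VV :: "(nat \<Rightarrow> 'a) \<Rightarrow> 'a \<Rightarrow> ('a fm set \<times> nat) \<Rightarrow> bool" where
  "VV Q p x = (if p \<in> range Q then inv Q p \<le> snd x else Atom p \<in> fst x)"

lemma RR_trans: "RR x y \<Longrightarrow> RR y z \<Longrightarrow> RR x z"
  unfolding RR_def using Rc_trans by (meson order.strict_trans)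

lemma sem_qconj:
  assumes "inj Q"
  shows "sem RR (VV Q) (N, j) (qconj Q n) \<longleftrightarrow> n \<le> j"
proof (induction n)
  case 0
  then show ?case using assms by (simp add: VV_def)
next
  case (Suc n)
  then show ?case using assms by (auto simp add: VV_def)
qed

lemma truth:
  assumes "inj Q"
  shows "maxcons M \<Longrightarrow> wf_num B \<Longrightarrow> (\<forall>m\<in>boxnums B. m < i) \<Longrightarrow> atoms (erase B) \<inter> range Q = {}
    \<Longrightarrow> sem RR (VV Q) (M, i) (translate Q B) = (erase B \<in> M)"
proof (induction B arbitrary: M i)
  case (NAtom p)
  then show ?case by (auto simp: VV_def)
next
  case NBot
  then show ?case using mc_Bot by simp
next
  case (NAnd B1 B2)
  then show ?case by (simp add: mc_And Int_Un_distrib2)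
next
  case (NOr B1 B2)
  then show ?case by (simp add: mc_Or Int_Un_distrib2)
next
  case (NImp B1 B2)
  then show ?case by (simp add: mc_Imp Int_Un_distrib2)
next
  case (NNeg B)
  then show ?case by (simp add: mc_Neg')
next
  case (NBox n B)
  have bn: "\<forall>m\<in>boxnums B. m < n" and wfB: "wf_num B" using NBox.prems by auto
  have ni: "n < i" using NBox.prems by simp
  have at: "atoms (erase B) \<inter> range Q = {}" using NBox.prems by simp
  have IH: "\<And>N j. maxcons N \<Longrightarrow> n \<le> j \<Longrightarrow> sem RR (VV Q) (N, j) (translate Q B) = (erase B \<in> N)"
  proof -
    fix N :: "'a fm set" and j :: nat assume "maxcons N" "n \<le> j"
    moreover have "\<forall>m\<in>boxnums B. m < j" using bn \<open>n \<le> j\<close> by auto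
    ultimately show "sem RR (VV Q) (N, j) (translate Q B) = (erase B \<in> N)"
      using NBox.IH wfB at by blast
  qed
  have "sem RR (VV Q) (M, i) (translate Q (NBox n B)) \<longleftrightarrow>
        (\<forall>N j. maxcons N \<and> Rc M N \<and> j < i \<longrightarrow> n \<le> j \<longrightarrow> sem RR (VV Q) (N, j) (translate Q B))"
    using NBox.prems(1) sem_qconj[OF assms] by (auto simp: RR_def)
  also have "\<dots> \<longleftrightarrow> (\<forall>N. maxcons N \<and> Rc M N \<longrightarrow> erase B \<in> N)"
  proof
    assume H: "\<forall>N j. maxcons N \<and> Rc M N \<and> j < i \<longrightarrow> n \<le> j \<longrightarrow> sem RR (VV Q) (N, j) (translate Q B)"
    show "\<forall>N. maxcons N \<and> Rc M N \<longrightarrow> erase B \<in> N"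
      using H[rule_format, of _ n] ni IH by auto
  next
    assume H: "\<forall>N. maxcons N \<and> Rc M N \<longrightarrow> erase B \<in> N"
    show "\<forall>N j. maxcons N \<and> Rc M N \<and> j < i \<longrightarrow> n \<le> j \<longrightarrow> sem RR (VV Q) (N, j) (translate Q B)"
      using H IH by auto
  qed
  also have "\<dots> \<longleftrightarrow> erase (NBox n B) \<in> M" using mc_box[OF NBox.prems(1)] by simp
  finally show ?case .
qed

lemma finite_boxnums: "finite (boxnums t)"
  by (induction t) auto

theorem theorem4p3:
  fixes A :: "'a fm" and t :: "'a nfm" and Q :: "nat \<Rightarrow> 'a"
  assumes "inj Q"
    and "range Q \<inter> atoms A = {}"
    and "is_translation t A"
    and "GL (translate Q t)"
  shows "K4 A"
proof (rule ccontr)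
  assume nA: "\<not> K4 A"
  have "cons {Neg A}" unfolding cons_def
  proof
    assume "\<exists>L. set L \<subseteq> {Neg A} \<and> K4 (Neg (conjs L))"
    then obtain L where L: "set L \<subseteq> {Neg A}" "K4 (Neg (conjs L))" by blast
    have "K4 A" by (rule K4_pc[of "[Neg (conjs L)]"]) (use L in \<open>auto simp: peval_conjs\<close>)
    then show False using nA by blast
  qed
  then obtain M where M: "{Neg A} \<subseteq> M" "maxcons M" using lindenbaum by blast
  then have AM: "A \<notin> M" using mc_neg by blast
  obtain i where i: "\<forall>m\<in>boxnums t. m < i"
    using finite_boxnums[of t] finite_nat_set_iff_bounded by blast
  have tr: "\<And>x y z. RR x y \<Longrightarrow> RR y z \<Longrightarrow> RR x z" by (rule RR_trans)
  have dec: "\<And>x y. RR x y \<Longrightarrow> snd y < (snd x :: nat)" by (simp add: RR_def)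
  have "sem RR (VV Q) (M, i) (translate Q t)" by (rule GL_sound[OF assms(4) tr dec])
  moreover have "sem RR (VV Q) (M, i) (translate Q t) = (erase t \<in> M)"
    using truth[OF assms(1) M(2)] i assms(2,3) unfolding is_translation_def by blast
  ultimately show False using AM assms(3) unfolding is_translation_def by simp
qed

end
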